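(* If $f:\{0,1\}^n\to\{0,1\}$ is a monotone Boolean function, then $\max\{\mathsf N(f)^2,\mathsf N(\overline f)^2\}\ge\Omega(s(f))$.
   Context: $\mathsf N(f)$ is the minimum degree of a real polynomial $p$ with $|p(x)|\le1/3$ whenever $f(x)=0$ and $|p(x)|\ge1$ whenever $f(x)=1$; $\overline f=1-f$. $f$ is monotone if it is monotonically increasing or decreasing in the coordinatewise order. $s(f)$ is the sensitivity of $f$: the maximum over $x$ of the number of $i\in[n]$ with $f(x)\neq f(x^{\{i\}})$, where $x^{\{i\}}$ is $x$ with bit $i$ flipped. Constants are absolute. *)

theory Defs
  imports Complex_Main
begin

text \<open>Points of the Boolean cube {0,1}^n are represented by the set of
coordinates equal to 1, i.e. subsets of {..<n}. A Boolean function is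
f :: nat set \<Rightarrow> bool (True = 1); only its values on the cube matter.\<close>

definition cube :: "nat \<Rightarrow> nat set set" where
  "cube n = Pow {..<n}"

definition mpoly_eval :: "nat \<Rightarrow> (nat set \<Rightarrow> real) \<Rightarrow> nat set \<Rightarrow> real" where
  "mpoly_eval n c X = (\<Sum>S\<in>Pow {..<n}. c S * (\<Prod>i\<in>S. if i \<in> X then 1 else 0))"

definition mpoly_deg_le :: "nat \<Rightarrow> (nat set \<Rightarrow> real) \<Rightarrow> nat \<Rightarrow> bool" where
  "mpoly_deg_le n c d \<longleftrightarrow> (\<forall>S\<subseteq>{..<n}. c S \<noteq> 0 \<longrightarrow> card S \<le> d)"

definition nondet_deg :: "nat \<Rightarrow> (nat set \<Rightarrow> bool) \<Rightarrow> nat" where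
  "nondet_deg n f = (LEAST d. \<exists>c. mpoly_deg_le n c d \<and>
      (\<forall>X\<in>cube n. (\<not> f X \<longrightarrow> \<bar>mpoly_eval n c X\<bar> \<le> 1/3) \<and>
                   (f X \<longrightarrow> \<bar>mpoly_eval n c X\<bar> \<ge> 1)))"

definition sensitivity :: "nat \<Rightarrow> (nat set \<Rightarrow> bool) \<Rightarrow> nat" where
  "sensitivity n f = Max ((\<lambda>X. card {i\<in>{..<n}. f X \<noteq> f (X - {i} \<union> ({i} - X))}) ` cube n)"

definition monotone_bf :: "nat \<Rightarrow> (nat set \<Rightarrow> bool) \<Rightarrow> bool" where
  "monotone_bf n f \<longleftrightarrow>
     (\<forall>X\<in>cube n. \<forall>Y\<in>cube n. X \<subseteq> Y \<longrightarrow> (f X \<longrightarrow> f Y)) \<or>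
     (\<forall>X\<in>cube n. \<forall>Y\<in>cube n. X \<subseteq> Y \<longrightarrow> (f Y \<longrightarrow> f X))"

end

theory Submission
  imports Defs "HOL-Computational_Algebra.Polynomial"
begin


lemma prod_gt_fact: "(\<Prod>i\<in>{k<..k+m}. i) * fact k = (fact (k+m) :: nat)"
proof (induction m)
  case 0 then show ?case by simp
next
  case (Suc m)
  have "{k<..k+Suc m} = insert (Suc (k+m)) {k<..k+m}" by auto
  then have "(\<Prod>i\<in>{k<..k+Suc m}. i) = Suc (k+m) * (\<Prod>i\<in>{k<..k+m}. i)" by simp
  then show ?case using Suc by (simp add: algebra_simps)
qed

lemma prod_gt_shift_fact: "(\<Prod>i\<in>{k<..k+m}. i - k) = (fact m :: nat)"
proof (induction m)
  case 0 then show ?case by simp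
next
  case (Suc m)
  have "{k<..k+Suc m} = insert (Suc (k+m)) {k<..k+m}" by auto
  then have "(\<Prod>i\<in>{k<..k+Suc m}. i - k) = Suc m * (\<Prod>i\<in>{k<..k+m}. i - k)" by simp
  then show ?case using Suc by (simp add: algebra_simps)
qed

lemma prod_lt_fact: "(\<Prod>i\<in>{1..<j}. j - i) = (fact (j - 1) :: nat)"
proof -
  have "(\<Prod>i\<in>{1..<j}. j - i) = (\<Prod>i\<in>{0..<j-1}. j - 1 - i)"
  proof (rule prod.reindex_bij_witness[where i="\<lambda>i. i + 1" and j="\<lambda>i. i - 1"]) qed auto
  also have "\<dots> = fact (j-1)" by (simp add: fact_prod_rev)
  finally show ?thesis .
qed

lemma prod_lt_plus: "j \<ge> 1 \<Longrightarrow> 2 * j * fact j * (\<Prod>i\<in>{1..<j}. j + i) = (fact (2*j) :: nat)"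
proof -
  assume j: "j \<ge> 1"
  have "(\<Prod>i\<in>{1..<j}. j + i) = (\<Prod>i\<in>{j<..j+(j-1)}. i)"
  proof (rule prod.reindex_bij_witness[where i="\<lambda>i. i - j" and j="\<lambda>i. i + j"]) qed (use j in auto)
  then have "(\<Prod>i\<in>{1..<j}. j + i) * fact j = fact (j + (j - 1))"
    using prod_gt_fact[of j "j-1"] by simp
  moreover have "fact (2*j) = 2 * j * (fact (j + (j - 1)) :: nat)"
    using j by (metis Suc_diff_le add_Suc_right diff_Suc_1 fact_Suc mult_2 of_nat_id)
  ultimately show ?thesis by (simp add: algebra_simps)
qed

lemma prod_gt_plus: "j \<le> D \<Longrightarrow> fact (2*j) * (\<Prod>i\<in>{j<..D}. i + j) = (fact (D + j) :: nat)"
proof -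
  assume jD: "j \<le> D"
  have "(\<Prod>i\<in>{j<..D}. i + j) = (\<Prod>i\<in>{2*j<..2*j+(D-j)}. i)"
  proof (rule prod.reindex_bij_witness[where i="\<lambda>i. i - j" and j="\<lambda>i. i + j"]) qed (use jD in auto)
  then show ?thesis using prod_gt_fact[of "2*j" "D-j"] jD by (simp add: algebra_simps)
qed

lemma fact_sq_le: "j \<le> D \<Longrightarrow> (fact D)^2 \<le> (fact (D - j) * fact (D + j) :: nat)"
proof (induction j)
  case 0 then show ?case by (simp add: power2_eq_square)
next
  case (Suc j)
  then have IH: "(fact D)^2 \<le> (fact (D - j) * fact (D + j) :: nat)" by simp
  have e1: "fact (D - j) = (D - j) * (fact (D - Suc j) :: nat)"
    using Suc.prems by (metis Suc_diff_Suc Suc_le_lessD fact_Suc of_nat_id)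
  have e2: "fact (D + Suc j) = (D + Suc j) * (fact (D + j) :: nat)" by simp
  have "fact (D - j) * fact (D + j) \<le> fact (D - Suc j) * (fact (D + Suc j) :: nat)"
    unfolding e1 e2 by (simp add: algebra_simps)
  then show ?case using IH by linarith
qed


lemma Rj_le:
  assumes j1: "1 \<le> j" and jD: "j \<le> D"
  shows "(\<Prod>i\<in>{1..D}-{j}. (real i)^2 / \<bar>(real i)^2 - (real j)^2\<bar>) \<le> 2"
proof -
  define I where "I = {1..D} - {j}"
  have I_split: "I = {1..<j} \<union> {j<..D}" unfolding I_def using jD by auto
  have disj: "{1..<j} \<inter> {j<..D} = {}" by auto
  define PA where "PA = (\<Prod>i\<in>I. i)"
  define dd where "dd i = (if i < j then j - i else i - j)" for i :: nat
  define PB where "PB = (\<Prod>i\<in>I. dd i)"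
  define PC where "PC = (\<Prod>i\<in>I. i + j)"
  have hA: "j * PA = fact D"
  proof -
    have "(\<Prod>i\<in>{1..D}. i) = j * (\<Prod>i\<in>{1..D}-{j}. i)"
      using j1 jD by (subst prod.remove[of _ j]) auto
    then show ?thesis unfolding PA_def I_def by (simp add: fact_prod)
  qed
  have hB: "PB = fact (j - 1) * fact (D - j)"
  proof -
    have "PB = (\<Prod>i\<in>{1..<j}. dd i) * (\<Prod>i\<in>{j<..D}. dd i)"
      unfolding PB_def I_split by (rule prod.union_disjoint) (use disj in auto)
    also have "(\<Prod>i\<in>{1..<j}. dd i) = (\<Prod>i\<in>{1..<j}. j - i)"
      by (rule prod.cong) (auto simp: dd_def)
    also have "(\<Prod>i\<in>{j<..D}. dd i) = (\<Prod>i\<in>{j<..j+(D-j)}. i - j)"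
      using jD by (intro prod.cong) (auto simp: dd_def)
    finally show ?thesis using prod_lt_fact[of j] prod_gt_shift_fact[of j "D-j"] by simp
  qed
  have hC: "2 * j * fact j * PC = fact (D + j)"
  proof -
    have "PC = (\<Prod>i\<in>{1..<j}. i + j) * (\<Prod>i\<in>{j<..D}. i + j)"
      unfolding PC_def I_split by (rule prod.union_disjoint) (use disj in auto)
    then have "2 * j * fact j * PC = (2 * j * fact j * (\<Prod>i\<in>{1..<j}. j + i)) * (\<Prod>i\<in>{j<..D}. i + j)"
      by (simp add: algebra_simps)
    also have "\<dots> = fact (2*j) * (\<Prod>i\<in>{j<..D}. i + j)" using prod_lt_plus[OF j1] by simp
    also have "\<dots> = fact (D + j)" using prod_gt_plus[OF jD] .
    finally show ?thesis .
  qed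
  have fj: "fact j = j * (fact (j - 1) :: nat)"
    using j1 by (cases j) auto
  have hBC: "2 * j^2 * (PB * PC) = fact (D - j) * fact (D + j)"
  proof -
    have "2 * j^2 * (PB * PC) = fact (D - j) * (2 * j * (j * fact (j - 1)) * PC)"
      unfolding hB by (simp add: algebra_simps power2_eq_square)
    also have "\<dots> = fact (D - j) * fact (D + j)" using hC fj by simp
    finally show ?thesis .
  qed
  have absfac: "\<bar>(real i)^2 - (real j)^2\<bar> = real (dd i) * real (i + j)" for i
  proof -
    have f1: "(real i)^2 - (real j)^2 = (real i - real j) * (real i + real j)"
      by (simp add: power2_eq_square algebra_simps)
    have f2: "\<bar>real i - real j\<bar> = real (dd i)"
      unfolding dd_def by (cases "i < j") (auto simp: of_nat_diff)
    have f3: "\<bar>real i + real j\<bar> = real (i + j)" by simp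
    show ?thesis unfolding f1 abs_mult f2 f3 ..
  qed
  have "(\<Prod>i\<in>I. (real i)^2 / \<bar>(real i)^2 - (real j)^2\<bar>) = (\<Prod>i\<in>I. (real i)^2) / (\<Prod>i\<in>I. real (dd i) * real (i + j))"
    unfolding absfac by (rule prod_dividef)
  also have "(\<Prod>i\<in>I. (real i)^2) = real PA ^ 2" unfolding PA_def by (simp add: prod_power_distrib)
  also have "(\<Prod>i\<in>I. real (dd i) * real (i + j)) = real PB * real PC"
    unfolding PB_def PC_def by (simp add: prod.distrib)
  also have "real PA ^ 2 / (real PB * real PC) = 2 * (real (fact D))^2 / (real (fact (D - j)) * real (fact (D + j)))"
  proof -
    have jpos: "real j > 0" using j1 by simp
    have a0: "real (j * PA) = real (fact D)" by (simp only: hA)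
    have a: "real j ^ 2 * real PA ^ 2 = real (fact D) ^ 2"
      using a0 by (simp add: power_mult_distrib[symmetric])
    have b0: "real (2 * j^2 * (PB * PC)) = real (fact (D - j) * fact (D + j))" by (simp only: hBC)
    have b: "2 * real j ^ 2 * (real PB * real PC) = real (fact (D - j)) * real (fact (D + j))"
      using b0 by simp
    have "real (fact (D - j)) * real (fact (D + j)) > 0" by simp
    then have "2 * real j ^ 2 * (real PB * real PC) > 0" using b by simp
    then have pbc: "real PB * real PC > 0" using jpos by (simp add: zero_less_mult_iff)
    have "2 * (real (fact D))^2 / (real (fact (D - j)) * real (fact (D + j))) =
          2 * (real j ^ 2 * real PA ^ 2) / (2 * real j ^ 2 * (real PB * real PC))"
      by (simp only: a b)
    also have "\<dots> = real PA ^ 2 / (real PB * real PC)"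
      using jpos pbc by (simp add: field_simps)
    finally show ?thesis by simp
  qed
  also have "\<dots> \<le> 2"
  proof -
    have "(real (fact D))^2 \<le> real (fact (D - j)) * real (fact (D + j))"
      using fact_sq_le[OF jD] by (metis of_nat_le_iff of_nat_mult of_nat_power)
    moreover have "real (fact (D - j)) * real (fact (D + j)) > 0" by simp
    ultimately show ?thesis by (simp add: divide_le_eq)
  qed
  finally show ?thesis unfolding I_def .
qed


lemma sum_inv_sq: "D \<ge> 1 \<Longrightarrow> (\<Sum>i\<in>{1..D}. 1 / (real i)^2) \<le> 2 - 1 / real D"
proof (induction D rule: dec_induct)
  case base then show ?case by simp
next
  case (step D)
  have "(\<Sum>i\<in>{1..Suc D}. 1 / (real i)^2) = (\<Sum>i\<in>{1..D}. 1 / (real i)^2) + 1 / (real (Suc D))^2"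
    by simp
  also have "\<dots> \<le> 2 - 1 / real D + 1 / (real (Suc D))^2" using step by simp
  also have "\<dots> \<le> 2 - 1 / real (Suc D)"
  proof -
    have D: "real D \<ge> 1" using step by simp
    have "1 / (real (Suc D))^2 \<le> 1 / (real D * real (Suc D))"
      using D by (intro frac_le) (auto simp: power2_eq_square)
    also have "\<dots> = 1 / real D - 1 / real (Suc D)" using D by (simp add: field_simps)
    finally have "1 / (real (Suc D))^2 \<le> 1 / real D - 1 / real (Suc D)" .
    then show ?thesis by simp
  qed
  finally show ?case .
qed

lemma sum_inv_sq2: "(\<Sum>i\<in>{1..D}. 1 / (real i)^2) \<le> 2"
proof (cases "D \<ge> 1")
  case True
  then show ?thesis using sum_inv_sq[OF True] by (smt (verit) divide_nonneg_nonneg of_nat_0_le_iff)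
qed simp

lemma prodP_le: "(\<Prod>i\<in>{1..D}. 1 + 1 / (100 * (real i)^2)) \<le> exp (2/100)"
proof -
  have "(\<Prod>i\<in>{1..D}. 1 + 1 / (100 * (real i)^2)) \<le> (\<Prod>i\<in>{1..D}. exp (1 / (100 * (real i)^2)))"
    by (intro prod_mono) (auto simp: exp_ge_add_one_self add_nonneg_nonneg)
  also have "\<dots> = exp (\<Sum>i\<in>{1..D}. 1 / (100 * (real i)^2))" by (simp add: exp_sum)
  also have "(\<Sum>i\<in>{1..D}. 1 / (100 * (real i)^2)) = (\<Sum>i\<in>{1..D}. 1 / (real i)^2) / 100"
    by (simp add: sum_divide_distrib ac_simps)
  also have "exp (\<dots>) \<le> exp (2/100)" using sum_inv_sq2[of D] by simp
  finally show ?thesis .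
qed

definition unode :: "nat \<Rightarrow> real" where "unode i = 1 + 100 * (real i)^2"

lemma leb_bound:
  "(\<Sum>j\<le>D. \<Prod>i\<in>{..D}-{j}. unode i / \<bar>unode j - unode i\<bar>) \<le> exp (2/100) * (1 + 4/100)"
proof -
  define P where "P = (\<Prod>i\<in>{1..D}. 1 + 1 / (100 * (real i)^2))"
  have P1: "P \<ge> 1" unfolding P_def by (intro prod_ge_1) auto
  have t0: "(\<Prod>i\<in>{..D}-{0}. unode i / \<bar>unode 0 - unode i\<bar>) = P"
  proof -
    have "{..D}-{0} = {1..D}" by auto
    moreover have "unode i / \<bar>unode 0 - unode i\<bar> = 1 + 1 / (100 * (real i)^2)" if "i \<in> {1..D}" for i
      using that by (simp add: unode_def field_simps)
    ultimately show ?thesis unfolding P_def by (metis (no_types, lifting) prod.cong)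
  qed
  have tj: "(\<Prod>i\<in>{..D}-{j}. unode i / \<bar>unode j - unode i\<bar>) \<le> 2 * P / (100 * (real j)^2)"
    if j: "j \<in> {1..D}" for j
  proof -
    have split: "{..D}-{j} = insert 0 ({1..D}-{j})" using j by auto
    have f: "unode i / \<bar>unode j - unode i\<bar> = (1 + 1 / (100 * (real i)^2)) * ((real i)^2 / \<bar>(real i)^2 - (real j)^2\<bar>)"
      if "i \<in> {1..D}-{j}" for i
    proof -
      have "i \<ge> 1" "i \<noteq> j" using that by auto
      then have "(real i)^2 \<noteq> (real j)^2" by simp
      then have X: "\<bar>(real i)^2 - (real j)^2\<bar> > 0" by simp
      have d: "unode j - unode i = 100 * ((real j)^2 - (real i)^2)" by (simp add: unode_def algebra_simps)
      have e: "\<bar>unode j - unode i\<bar> = 100 * \<bar>(real i)^2 - (real j)^2\<bar>"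
        unfolding d abs_mult by (simp add: abs_minus_commute)
      have ipos: "(real i)^2 > 0" using \<open>i \<ge> 1\<close> by simp
      show ?thesis unfolding e using X ipos by (simp add: unode_def field_simps)
    qed
    have "(\<Prod>i\<in>{..D}-{j}. unode i / \<bar>unode j - unode i\<bar>) =
          (unode 0 / \<bar>unode j - unode 0\<bar>) * (\<Prod>i\<in>{1..D}-{j}. unode i / \<bar>unode j - unode i\<bar>)"
      unfolding split by (subst prod.insert) auto
    also have "unode 0 / \<bar>unode j - unode 0\<bar> = 1 / (100 * (real j)^2)"
      by (simp add: unode_def)
    also have "(\<Prod>i\<in>{1..D}-{j}. unode i / \<bar>unode j - unode i\<bar>) =
       (\<Prod>i\<in>{1..D}-{j}. 1 + 1 / (100 * (real i)^2)) * (\<Prod>i\<in>{1..D}-{j}. (real i)^2 / \<bar>(real i)^2 - (real j)^2\<bar>)"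
      by (subst prod.distrib[symmetric], rule prod.cong) (use f in auto)
    finally have eq: "(\<Prod>i\<in>{..D}-{j}. unode i / \<bar>unode j - unode i\<bar>) = 1 / (100 * (real j)^2) *
       ((\<Prod>i\<in>{1..D}-{j}. 1 + 1 / (100 * (real i)^2)) * (\<Prod>i\<in>{1..D}-{j}. (real i)^2 / \<bar>(real i)^2 - (real j)^2\<bar>))" .
    have le: "(\<Prod>i\<in>{1..D}-{j}. 1 + 1 / (100 * (real i)^2)) * (\<Prod>i\<in>{1..D}-{j}. (real i)^2 / \<bar>(real i)^2 - (real j)^2\<bar>) \<le> P * 2"
    proof (rule mult_mono)
      have "P = (1 + 1 / (100 * (real j)^2)) * (\<Prod>i\<in>{1..D}-{j}. 1 + 1 / (100 * (real i)^2))"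
        unfolding P_def using j by (subst prod.remove[of _ j]) auto
      moreover have "(\<Prod>i\<in>{1..D}-{j}. 1 + 1 / (100 * (real i)^2)) \<ge> 0" by (intro prod_nonneg) auto
      ultimately show "(\<Prod>i\<in>{1..D}-{j}. 1 + 1 / (100 * (real i)^2)) \<le> P"
        by (smt (verit) mult_le_cancel_right1 zero_le_divide_1_iff zero_le_mult_iff zero_le_power2)
      show "(\<Prod>i\<in>{1..D}-{j}. (real i)^2 / \<bar>(real i)^2 - (real j)^2\<bar>) \<le> 2"
        using j by (intro Rj_le) auto
    qed (use P1 in \<open>auto intro!: prod_nonneg\<close>)
    have jp: "1 / (100 * (real j)^2) \<ge> 0" by simp
    show ?thesis unfolding eq using mult_left_mono[OF le jp] by simp
  qed
  have "(\<Sum>j\<le>D. \<Prod>i\<in>{..D}-{j}. unode i / \<bar>unode j - unode i\<bar>)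
       = (\<Prod>i\<in>{..D}-{0}. unode i / \<bar>unode 0 - unode i\<bar>) + (\<Sum>j\<in>{1..D}. \<Prod>i\<in>{..D}-{j}. unode i / \<bar>unode j - unode i\<bar>)"
  proof -
    have "{..D} = insert 0 {1..D}" by auto
    then show ?thesis by (simp add: sum.insert)
  qed
  also have "\<dots> \<le> P + (\<Sum>j\<in>{1..D}. 2 * P / (100 * (real j)^2))"
    using t0 tj by (intro add_mono sum_mono) auto
  also have "(\<Sum>j\<in>{1..D}. 2 * P / (100 * (real j)^2)) = (2 * P / 100) * (\<Sum>j\<in>{1..D}. 1 / (real j)^2)"
    by (simp add: sum_distrib_left field_simps)
  also have "P + (2 * P / 100) * (\<Sum>j\<in>{1..D}. 1 / (real j)^2) \<le> P + (2 * P / 100) * 2"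
    using P1 sum_inv_sq2[of D] by (intro add_left_mono mult_left_mono) auto
  also have "P + (2 * P / 100) * 2 = P * (1 + 4/100)" by simp
  also have "\<dots> \<le> exp (2/100) * (1 + 4/100)" using prodP_le[of D] unfolding P_def by simp
  finally show ?thesis .
qed


lemma lagrange_interp:
  fixes q :: "real poly" and x :: "nat \<Rightarrow> real"
  assumes deg: "degree q \<le> D" and inj: "inj_on x {..D}"
  shows "poly q t = (\<Sum>j\<le>D. poly q (x j) * (\<Prod>i\<in>{..D}-{j}. (t - x i) / (x j - x i)))"
proof -
  define r where "r = (\<Sum>j\<le>D. smult (poly q (x j)) (\<Prod>i\<in>{..D}-{j}. smult (1 / (x j - x i)) [:- x i, 1:]))"
  have pr: "poly r t = (\<Sum>j\<le>D. poly q (x j) * (\<Prod>i\<in>{..D}-{j}. (t - x i) / (x j - x i)))" for t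
    unfolding r_def by (simp add: poly_sum poly_prod diff_divide_distrib)
  have dr: "degree r \<le> D"
    unfolding r_def
  proof (intro degree_sum_le)
    fix j assume j: "j \<in> {..D}"
    have "degree (\<Prod>i\<in>{..D}-{j}. smult (1 / (x j - x i)) [:- x i, 1:]) \<le> sum (degree \<circ> (\<lambda>i. smult (1 / (x j - x i)) [:- x i, 1:])) ({..D}-{j})"
      by (rule degree_prod_sum_le) simp
    also have "\<dots> \<le> sum (\<lambda>i. 1) ({..D}-{j})"
      by (intro sum_mono) (auto intro: order.trans[OF degree_smult_le])
    also have "\<dots> = D" using j by simp
    finally show "degree (smult (poly q (x j)) (\<Prod>i\<in>{..D}-{j}. smult (1 / (x j - x i)) [:- x i, 1:])) \<le> D"
      by (meson degree_smult_le order.trans)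
  qed simp
  have agree: "poly r (x k) = poly q (x k)" if k: "k \<le> D" for k
  proof -
    have "poly r (x k) = (\<Sum>j\<le>D. poly q (x j) * (\<Prod>i\<in>{..D}-{j}. (x k - x i) / (x j - x i)))" by (rule pr)
    also have "\<dots> = poly q (x k) * (\<Prod>i\<in>{..D}-{k}. (x k - x i) / (x k - x i))"
    proof (rule sum.mono_neutral_right[where S="{k}", simplified])
      show "finite {..D}" by simp
      show "k \<in> {..D}" using k by simp
      show "\<forall>j\<in>{..D} - {k}. poly q (x j) * (\<Prod>i\<in>{..D} - {j}. (x k - x i) / (x j - x i)) = 0"
      proof
        fix j assume "j \<in> {..D} - {k}"
        then have "k \<in> {..D}-{j}" using k by auto
        then have "(\<Prod>i\<in>{..D} - {j}. (x k - x i) / (x j - x i)) = 0"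
          by (intro prod_zero) auto
        then show "poly q (x j) * (\<Prod>i\<in>{..D} - {j}. (x k - x i) / (x j - x i)) = 0" by simp
      qed
    qed
    also have "(\<Prod>i\<in>{..D}-{k}. (x k - x i) / (x k - x i)) = 1"
    proof (rule prod.neutral, rule ballI)
      fix i assume "i \<in> {..D}-{k}"
      then have "x k \<noteq> x i" using inj k by (auto dest: inj_onD)
      then show "(x k - x i) / (x k - x i) = 1" by simp
    qed
    finally show ?thesis by simp
  qed
  have "r = q"
  proof (rule poly_eqI_degree[where A="x ` {..D}"])
    show "card (x ` {..D}) > degree r" using dr inj by (simp add: card_image)
    show "card (x ` {..D}) > degree q" using deg inj by (simp add: card_image)
  qed (use agree in auto)
  then show ?thesis using pr[of t] by (simp only:)
qed


definition symd :: "nat set \<Rightarrow> nat set \<Rightarrow> nat set" where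
  "symd a T = (a - T) \<union> (T - a)"

lemma split_prod_T:
  fixes G :: "nat \<Rightarrow> bool \<Rightarrow> real"
  assumes "finite B" "T \<subseteq> B"
  shows "(\<Prod>i\<in>B. G i (i \<in> T)) = (\<Prod>i\<in>T. G i True) * (\<Prod>i\<in>B-T. G i False)"
proof -
  have "(\<Prod>i\<in>B. G i (i \<in> T)) = (\<Prod>i\<in>T. G i (i \<in> T)) * (\<Prod>i\<in>B-T. G i (i \<in> T))"
    using assms by (metis prod.subset_diff mult.commute)
  also have "(\<Prod>i\<in>T. G i (i \<in> T)) = (\<Prod>i\<in>T. G i True)" by (rule prod.cong) auto
  also have "(\<Prod>i\<in>B-T. G i (i \<in> T)) = (\<Prod>i\<in>B-T. G i False)" by (rule prod.cong) auto
  finally show ?thesis .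
qed

lemma ext_monomial:
  fixes y :: real
  assumes fB: "finite B" and fS: "finite S"
  shows "(\<Sum>T\<in>Pow B. (\<Prod>i\<in>T. y) * (\<Prod>i\<in>B-T. 1 - y) * (\<Prod>i\<in>S. if i \<in> symd a T then 1 else 0))
       = (\<Prod>i\<in>S-B. if i \<in> a then 1 else 0) * (\<Prod>i\<in>S\<inter>B. if i \<in> a then 1 - y else y)"
proof -
  define K :: real where "K = (\<Prod>i\<in>S-B. if i \<in> a then 1 else 0)"
  define g :: "nat \<Rightarrow> bool \<Rightarrow> real" where
    "g i b = (if i \<in> S then (if b then (if i \<in> a then 0 else 1) else (if i \<in> a then 1 else 0)) else 1)" for i b
  have mono: "(\<Prod>i\<in>S. if i \<in> symd a T then 1 else 0) = K * (\<Prod>i\<in>B. g i (i \<in> T))"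
    if T: "T \<subseteq> B" for T
  proof -
    have S_eq: "S = (S - B) \<union> (S \<inter> B)" by auto
    have "(\<Prod>i\<in>S. if i \<in> symd a T then 1 else (0::real)) =
          (\<Prod>i\<in>S-B. if i \<in> symd a T then 1 else 0) * (\<Prod>i\<in>S\<inter>B. if i \<in> symd a T then 1 else 0)"
      using fS by (subst S_eq, subst prod.union_disjoint) auto
    also have "(\<Prod>i\<in>S-B. if i \<in> symd a T then 1 else (0::real)) = K"
      unfolding K_def using T by (intro prod.cong) (auto simp: symd_def)
    also have "S \<inter> B = {i \<in> B. i \<in> S}" by auto
    also have "(\<Prod>i\<in>{i \<in> B. i \<in> S}. if i \<in> symd a T then 1 else (0::real))
             = (\<Prod>i\<in>B. if i \<in> S then (if i \<in> symd a T then 1 else 0) else 1)"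
      using fB by (rule prod.inter_filter)
    also have "\<dots> = (\<Prod>i\<in>B. g i (i \<in> T))"
      by (intro prod.cong) (auto simp: g_def symd_def)
    finally show ?thesis .
  qed
  have "(\<Sum>T\<in>Pow B. (\<Prod>i\<in>T. y) * (\<Prod>i\<in>B-T. 1 - y) * (\<Prod>i\<in>S. if i \<in> symd a T then 1 else 0))
      = (\<Sum>T\<in>Pow B. K * ((\<Prod>i\<in>T. y * g i True) * (\<Prod>i\<in>B-T. (1 - y) * g i False)))"
  proof (rule sum.cong)
    fix T assume "T \<in> Pow B"
    then have T: "T \<subseteq> B" by auto
    show "(\<Prod>i\<in>T. y) * (\<Prod>i\<in>B-T. 1 - y) * (\<Prod>i\<in>S. if i \<in> symd a T then 1 else 0)
        = K * ((\<Prod>i\<in>T. y * g i True) * (\<Prod>i\<in>B-T. (1 - y) * g i False))"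
      using split_prod_T[OF fB T, of g] mono[OF T] by (simp add: prod.distrib)
  qed simp
  also have "\<dots> = K * (\<Prod>i\<in>B. y * g i True + (1 - y) * g i False)"
    using prod_add[OF fB, of "\<lambda>i. y * g i True" "\<lambda>i. (1 - y) * g i False"]
    by (simp add: sum_distrib_left)
  also have "(\<Prod>i\<in>B. y * g i True + (1 - y) * g i False) = (\<Prod>i\<in>B. if i \<in> S then (if i \<in> a then 1 - y else y) else 1)"
    by (intro prod.cong) (auto simp: g_def)
  also have "\<dots> = (\<Prod>i\<in>{i \<in> B. i \<in> S}. if i \<in> a then 1 - y else y)"
    using fB by (rule prod.inter_filter[symmetric])
  also have "{i \<in> B. i \<in> S} = S \<inter> B" by auto
  finally show ?thesis unfolding K_def .
qed


lemma ext_poly: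
  assumes deg: "mpoly_deg_le n c d" and B: "B \<subseteq> {..<n}"
  shows "\<exists>q::real poly. degree q \<le> d \<and> (\<forall>y. poly q y =
     (\<Sum>T\<in>Pow B. (\<Prod>i\<in>T. y) * (\<Prod>i\<in>B-T. 1 - y) * mpoly_eval n c (symd a T)))"
proof -
  have fB: "finite B" using B finite_subset by blast
  define K where "K S = (\<Prod>i\<in>S-B. if i \<in> a then 1 else (0::real))" for S
  define Q where "Q S = (\<Prod>i\<in>S\<inter>B. if i \<in> a then [:1, -1:] else [:0, 1::real:])" for S
  define q where "q = (\<Sum>S\<in>Pow {..<n}. smult (c S * K S) (Q S))"
  have dq: "degree q \<le> d"
    unfolding q_def
  proof (rule degree_sum_le)
    fix S assume S: "S \<in> Pow {..<n}"
    show "degree (smult (c S * K S) (Q S)) \<le> d"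
    proof (cases "c S = 0")
      case False
      then have cS: "card S \<le> d" using deg S unfolding mpoly_deg_le_def by auto
      have fS: "finite S" using S finite_subset by auto
      have "degree (Q S) \<le> sum (degree \<circ> (\<lambda>i. if i \<in> a then [:1, -1:] else [:0, 1::real:])) (S \<inter> B)"
        unfolding Q_def by (rule degree_prod_sum_le) (use fS in auto)
      also have "\<dots> \<le> sum (\<lambda>i. 1) (S \<inter> B)" by (intro sum_mono) auto
      also have "\<dots> = card (S \<inter> B)" by simp
      also have "\<dots> \<le> card S" using fS by (intro card_mono) auto
      finally show ?thesis using cS degree_smult_le by (meson order.trans)
    qed simp
  qed simp
  have pq: "poly q y = (\<Sum>T\<in>Pow B. (\<Prod>i\<in>T. y) * (\<Prod>i\<in>B-T. 1 - y) * mpoly_eval n c (symd a T))" for y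
  proof -
    have pQ: "poly (Q S) y = (\<Prod>i\<in>S\<inter>B. if i \<in> a then 1 - y else y)" for S
      unfolding Q_def poly_prod by (intro prod.cong) auto
    have "poly q y = (\<Sum>S\<in>Pow {..<n}. c S * (K S * (\<Prod>i\<in>S\<inter>B. if i \<in> a then 1 - y else y)))"
      unfolding q_def poly_sum by (simp add: pQ mult.assoc)
    also have "\<dots> = (\<Sum>S\<in>Pow {..<n}. c S * (\<Sum>T\<in>Pow B. (\<Prod>i\<in>T. y) * (\<Prod>i\<in>B-T. 1 - y) * (\<Prod>i\<in>S. if i \<in> symd a T then 1 else 0)))"
    proof (rule sum.cong)
      fix S assume "S \<in> Pow {..<n}"
      then have fS: "finite S" using finite_subset by auto
      show "c S * (K S * (\<Prod>i\<in>S\<inter>B. if i \<in> a then 1 - y else y)) =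
            c S * (\<Sum>T\<in>Pow B. (\<Prod>i\<in>T. y) * (\<Prod>i\<in>B-T. 1 - y) * (\<Prod>i\<in>S. if i \<in> symd a T then 1 else 0))"
        unfolding K_def using ext_monomial[OF fB fS, of y a] by simp
    qed simp
    also have "\<dots> = (\<Sum>T\<in>Pow B. (\<Prod>i\<in>T. y) * (\<Prod>i\<in>B-T. 1 - y) * mpoly_eval n c (symd a T))"
      unfolding mpoly_eval_def sum_distrib_left
      by (subst sum.swap) (simp add: algebra_simps sum_distrib_left)
    finally show ?thesis .
  qed
  show ?thesis using dq pq by blast
qed

lemma weights_sum:
  fixes B :: "nat set"
  assumes "finite B"
  shows "(\<Sum>T\<in>Pow B. (\<Prod>i\<in>T. y) * (\<Prod>i\<in>B-T. 1 - (y::real))) = 1"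
  using ext_monomial[OF assms finite.emptyI, of y "{}"] by simp

lemma exp_neg1: "exp (-1::real) \<le> 4/9"
proof -
  have "(3/2::real) \<le> exp (1/2)" using exp_ge_add_one_self[of "1/2::real"] by simp
  then have "(3/2::real)^2 \<le> exp (1/2) ^ 2" by (intro power_mono) auto
  also have "exp (1/2::real) ^ 2 = exp 1" by (simp add: exp_double[symmetric] power2_eq_square exp_add[symmetric])
  finally have "exp (1::real) \<ge> (3/2)^2" .
  then have "exp (1::real) \<ge> 9/4" by (simp add: power2_eq_square)
  then show ?thesis by (simp add: exp_minus field_simps)
qed

lemma exp_002: "exp (2/100::real) \<le> 1 + 2/100 + (2/100)^2"
  by (rule exp_bound) auto


lemma key_bound:
  assumes deg: "mpoly_deg_le n c d" and B: "B \<subseteq> {..<n}" and s: "card B = s" "s \<ge> 1"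
    and pa: "\<bar>mpoly_eval n c a\<bar> \<ge> 1"
    and small: "\<And>T. T \<subseteq> B \<Longrightarrow> T \<noteq> {} \<Longrightarrow> \<bar>mpoly_eval n c (symd a T)\<bar> \<le> 1/3"
  shows "real s \<le> 100 * (real d)^2"
proof (rule ccontr)
  assume "\<not> ?thesis"
  then have "real (100 * d^2) < real s" by simp
  then have "100 * d^2 < s" by (simp only: of_nat_less_iff)
  then have "1 + 100 * d^2 \<le> s" by simp
  then have "real (1 + 100 * d^2) \<le> real s" by (simp only: of_nat_le_iff)
  then have big: "1 + 100 * (real d)^2 \<le> real s" by simp
  have spos: "real s > 0" using s by simp
  have fB: "finite B" using B finite_subset by blast
  obtain q :: "real poly" where dq: "degree q \<le> d" and
    pq: "\<And>y. poly q y = (\<Sum>T\<in>Pow B. (\<Prod>i\<in>T. y) * (\<Prod>i\<in>B-T. 1 - y) * mpoly_eval n c (symd a T))"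
    using ext_poly[OF deg B, of a] by blast
  define v where "v = mpoly_eval n c a"
  have E0: "poly q 0 = v"
  proof -
    have "poly q 0 = (\<Sum>T\<in>Pow B. (\<Prod>i\<in>T. 0) * (\<Prod>i\<in>B-T. 1 - 0) * mpoly_eval n c (symd a T))"
      by (rule pq)
    also have "\<dots> = (\<Prod>i\<in>{}. 0) * (\<Prod>i\<in>B-{}. 1 - 0) * mpoly_eval n c (symd a {}) +
        (\<Sum>T\<in>Pow B - {{}}. (\<Prod>i\<in>T. 0) * (\<Prod>i\<in>B-T. 1 - 0) * mpoly_eval n c (symd a T))"
      using fB by (subst sum.remove[of _ "{}"]) auto
    also have "(\<Sum>T\<in>Pow B - {{}}. (\<Prod>i\<in>T. 0::real) * (\<Prod>i\<in>B-T. 1 - 0) * mpoly_eval n c (symd a T)) = 0"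
    proof (rule sum.neutral, rule ballI)
      fix T assume T: "T \<in> Pow B - {{}}"
      then have "finite T" "T \<noteq> {}" using fB finite_subset by auto
      then have "(\<Prod>i\<in>T. 0::real) = 0" by (simp add: card_gt_0_iff)
      then show "(\<Prod>i\<in>T. 0::real) * (\<Prod>i\<in>B-T. 1 - 0) * mpoly_eval n c (symd a T) = 0" by simp
    qed
    also have "(\<Prod>i\<in>{}. 0) * (\<Prod>i\<in>B-{}. 1 - 0) * mpoly_eval n c (symd a {}) + 0 = v"
      by (simp add: v_def symd_def)
    finally show ?thesis .
  qed
  have Ebound: "\<bar>poly q y\<bar> \<le> exp (-1) * \<bar>v\<bar> + 1/3" if y1: "1 / real s \<le> y" and y2: "y \<le> 1" for y
  proof -
    have y0: "y \<ge> 0" using y1 spos by (smt (verit) divide_nonneg_nonneg of_nat_0_le_iff)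
    define w where "w T = (\<Prod>i\<in>T. y) * (\<Prod>i\<in>B-T. 1 - y)" for T
    have w0: "w T \<ge> 0" for T unfolding w_def using y0 y2 by (intro mult_nonneg_nonneg prod_nonneg) auto
    have wsum: "(\<Sum>T\<in>Pow B. w T) = 1" unfolding w_def by (rule weights_sum[OF fB])
    have emp: "{} \<in> Pow B" by simp
    have split: "(\<Sum>T\<in>Pow B. f T) = f {} + (\<Sum>T\<in>Pow B - {{}}. f T)" for f :: "nat set \<Rightarrow> real"
      using fB by (subst sum.remove[OF _ emp]) auto
    have E: "poly q y = w {} * v + (\<Sum>T\<in>Pow B - {{}}. w T * mpoly_eval n c (symd a T))"
      unfolding pq split w_def by (simp add: v_def symd_def)
    have W: "w {} = (1 - y)^s" unfolding w_def using s by simp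
    have Rb: "\<bar>\<Sum>T\<in>Pow B - {{}}. w T * mpoly_eval n c (symd a T)\<bar> \<le> 1/3"
    proof -
      have "\<bar>\<Sum>T\<in>Pow B - {{}}. w T * mpoly_eval n c (symd a T)\<bar> \<le> (\<Sum>T\<in>Pow B - {{}}. \<bar>w T * mpoly_eval n c (symd a T)\<bar>)"
        by (rule sum_abs)
      also have "\<dots> \<le> (\<Sum>T\<in>Pow B - {{}}. w T * (1/3))"
      proof (rule sum_mono)
        fix T assume "T \<in> Pow B - {{}}"
        then have "\<bar>mpoly_eval n c (symd a T)\<bar> \<le> 1/3" using small by auto
        then show "\<bar>w T * mpoly_eval n c (symd a T)\<bar> \<le> w T * (1/3)"
        proof -
          have "\<bar>w T * mpoly_eval n c (symd a T)\<bar> = w T * \<bar>mpoly_eval n c (symd a T)\<bar>"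
            using w0[of T] by (simp add: abs_mult)
          also have "\<dots> \<le> w T * (1/3)" by (rule mult_left_mono[OF \<open>\<bar>mpoly_eval n c (symd a T)\<bar> \<le> 1/3\<close> w0])
          finally show ?thesis .
        qed
      qed
      also have "\<dots> = (1/3) * (\<Sum>T\<in>Pow B - {{}}. w T)" by (simp add: sum_distrib_left mult.commute)
      also have "(\<Sum>T\<in>Pow B - {{}}. w T) \<le> 1" using wsum split[of w] w0[of "{}"] by simp
      finally show ?thesis by simp
    qed
    have P: "(1 - y)^s \<le> exp (-1)"
    proof -
      have "(1 - y)^s \<le> exp (-y)^s"
        using y2 by (intro power_mono) (use exp_ge_add_one_self[of "-y"] in auto)
      also have "\<dots> = exp (- (y * real s))" by (simp add: exp_of_nat_mult[symmetric] mult.commute)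
      also have "\<dots> \<le> exp (-1)" using y1 spos by (simp add: field_simps)
      finally show ?thesis .
    qed
    have P0: "(1 - y)^s \<ge> 0" using y2 by simp
    have "\<bar>poly q y\<bar> \<le> \<bar>w {} * v\<bar> + \<bar>\<Sum>T\<in>Pow B - {{}}. w T * mpoly_eval n c (symd a T)\<bar>"
      unfolding E by (rule abs_triangle_ineq)
    also have "\<bar>w {} * v\<bar> = (1 - y)^s * \<bar>v\<bar>" unfolding W abs_mult using P0 by simp
    also have "(1 - y)^s * \<bar>v\<bar> \<le> exp (-1) * \<bar>v\<bar>" using P by (rule mult_right_mono) simp
    finally show ?thesis using Rb by linarith
  qed
  define x where "x j = unode j / real s" for j
  have unode_pos: "unode i > 0" for i
  proof -
    have "(real i)^2 \<ge> 0" by simp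
    then show ?thesis unfolding unode_def by linarith
  qed
  have inj: "inj_on x {..d}"
  proof (rule inj_onI)
    fix i j assume "x i = x j"
    then have "unode i = unode j" unfolding x_def using spos by simp
    then have "real i ^ 2 = real j ^ 2" unfolding unode_def by simp
    then show "i = j" by simp
  qed
  define L where "L j = (\<Prod>i\<in>{..d}-{j}. (0 - x i) / (x j - x i))" for j
  have absL: "\<bar>L j\<bar> = (\<Prod>i\<in>{..d}-{j}. unode i / \<bar>unode j - unode i\<bar>)" for j
    unfolding L_def abs_prod
  proof (rule prod.cong)
    fix i assume "i \<in> {..d} - {j}"
    have "(0 - x i) / (x j - x i) = - (unode i / (unode j - unode i))"
      unfolding x_def using spos by (simp add: field_simps)
    then show "\<bar>(0 - x i) / (x j - x i)\<bar> = unode i / \<bar>unode j - unode i\<bar>"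
      using unode_pos[of i] by simp
  qed simp
  have xr: "1 / real s \<le> x j \<and> x j \<le> 1" if "j \<le> d" for j
  proof
    show "1 / real s \<le> x j" unfolding x_def unode_def using spos by (simp add: divide_right_mono)
    have "real j ^ 2 \<le> real d ^ 2" using that by (simp add: power_mono)
    then have "unode j \<le> real s" using big unfolding unode_def by linarith
    then show "x j \<le> 1" unfolding x_def using spos by simp
  qed
  have "v = (\<Sum>j\<le>d. poly q (x j) * L j)"
    unfolding E0[symmetric] L_def by (rule lagrange_interp[OF dq inj])
  then have "\<bar>v\<bar> \<le> (\<Sum>j\<le>d. \<bar>poly q (x j)\<bar> * \<bar>L j\<bar>)"
    by (metis (no_types, lifting) abs_mult sum.cong sum_abs)
  also have "\<dots> \<le> (\<Sum>j\<le>d. (exp (-1) * \<bar>v\<bar> + 1/3) * \<bar>L j\<bar>)"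
    by (intro sum_mono mult_right_mono Ebound) (use xr in auto)
  also have "\<dots> = (exp (-1) * \<bar>v\<bar> + 1/3) * (\<Sum>j\<le>d. \<bar>L j\<bar>)" by (simp add: sum_distrib_left)
  also have "\<dots> \<le> (exp (-1) * \<bar>v\<bar> + 1/3) * (exp (2/100) * (1 + 4/100))"
    unfolding absL by (intro mult_left_mono leb_bound) (auto intro: add_nonneg_nonneg)
  also have "\<dots> \<le> (4/9 * \<bar>v\<bar> + 1/3 * \<bar>v\<bar>) * ((1 + 2/100 + (2/100)^2) * (1 + 4/100))"
  proof (rule mult_mono)
    have "exp (-1) * \<bar>v\<bar> \<le> 4/9 * \<bar>v\<bar>" using exp_neg1 by (intro mult_right_mono) auto
    moreover have "1/3 \<le> 1/3 * \<bar>v\<bar>" using pa v_def by simp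
    ultimately show "exp (-1) * \<bar>v\<bar> + 1/3 \<le> 4/9 * \<bar>v\<bar> + 1/3 * \<bar>v\<bar>" by linarith
    show "exp (2/100) * (1 + 4/100) \<le> (1 + 2/100 + (2/100)^2) * (1 + 4/100::real)"
      using exp_002 by (intro mult_right_mono) auto
    show "0 \<le> 4/9 * \<bar>v\<bar> + 1/3 * \<bar>v\<bar>" by simp
    show "0 \<le> exp (2/100) * (1 + 4/100::real)" by simp
  qed
  finally have "\<bar>v\<bar> \<le> \<bar>v\<bar> * ((7/9) * ((1 + 2/100 + (2/100)^2) * (1 + 4/100)))" by (simp add: algebra_simps)
  moreover have k1: "(7/9::real) * ((1 + 2/100 + (2/100)^2) * (1 + 4/100)) < 1" by (simp add: power2_eq_square)
  moreover have vp: "\<bar>v\<bar> > 0" using pa v_def by simp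
  ultimately show False using mult_strict_left_mono[OF k1 vp] by linarith
qed


lemma exact_rep:
  fixes g :: "nat set \<Rightarrow> bool"
  shows "\<exists>c. mpoly_deg_le n c n \<and> (\<forall>X\<in>cube n. mpoly_eval n c X = (if g X then 1 else 0))"
proof -
  define N where "N = {..<n}"
  have fN: "finite N" unfolding N_def by simp
  define e where "e Y U = (\<Prod>i\<in>U. if i \<in> Y then 1 else (-1::real)) * (\<Prod>i\<in>N-U. if i \<in> Y then 0 else 1)" for Y U :: "nat set"
  define c where "c U = (\<Sum>Y\<in>Pow N. (if g Y then 1 else 0) * e Y U)" for U
  define M where "M U X = (\<Prod>i\<in>U. if i \<in> X then 1 else (0::real))" for U X :: "nat set"
  have delta: "(\<Prod>i\<in>N. if i \<in> Y then M {i} X else 1 - M {i} X) = (\<Sum>U\<in>Pow N. e Y U * M U X)" for Y X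
  proof -
    have "(\<Prod>i\<in>N. if i \<in> Y then M {i} X else 1 - M {i} X) =
          (\<Prod>i\<in>N. (if i \<in> Y then 1 else -1) * M {i} X + (if i \<in> Y then 0 else 1))"
      by (intro prod.cong) auto
    also have "\<dots> = (\<Sum>U\<in>Pow N. (\<Prod>i\<in>U. (if i \<in> Y then 1 else -1) * M {i} X) * (\<Prod>i\<in>N-U. if i \<in> Y then 0 else 1))"
      by (rule prod_add[OF fN])
    also have "\<dots> = (\<Sum>U\<in>Pow N. e Y U * M U X)"
      unfolding e_def M_def by (intro sum.cong) (auto simp: prod.distrib)
    finally show ?thesis .
  qed
  have delta2: "(\<Prod>i\<in>N. if i \<in> Y then M {i} X else 1 - M {i} X) = (if X = Y then 1 else 0)"
    if "X \<subseteq> N" "Y \<subseteq> N" for X Y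
  proof (cases "X = Y")
    case True
    have "\<forall>i\<in>N. (if i \<in> Y then M {i} X else 1 - M {i} X) = 1" using True unfolding M_def by auto
    then show ?thesis using True by (simp only: prod.neutral) simp
  next
    case False
    then obtain i where i: "(i \<in> X) \<noteq> (i \<in> Y)" by blast
    then have "i \<in> N" using that by auto
    have z: "(if i \<in> Y then M {i} X else 1 - M {i} X) = 0" using i by (auto simp: M_def)
    have "(\<Prod>i\<in>N. if i \<in> Y then M {i} X else 1 - M {i} X) = 0"
      using fN \<open>i \<in> N\<close> z by (intro prod_zero) blast+
    then show ?thesis using False by simp
  qed
  have eval: "mpoly_eval n c X = (if g X then 1 else 0)" if X: "X \<in> cube n" for X
  proof -
    have XN: "X \<subseteq> N" using X unfolding cube_def N_def by auto
    have "(if g X then 1 else 0) = (\<Sum>Y\<in>Pow N. (if g Y then 1 else 0) * (if X = Y then 1 else (0::real)))"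
    proof -
      have "(\<Sum>Y\<in>Pow N. (if g Y then 1 else 0) * (if X = Y then 1 else (0::real))) =
            (\<Sum>Y\<in>Pow N. if Y = X then (if g X then 1 else 0) else 0)"
        by (rule sum.cong) auto
      also have "\<dots> = (if g X then 1 else 0)" using XN fN by (subst sum.delta) auto
      finally show ?thesis by simp
    qed
    also have "\<dots> = (\<Sum>Y\<in>Pow N. (if g Y then 1 else 0) * (\<Sum>U\<in>Pow N. e Y U * M U X))"
      by (intro sum.cong refl) (use XN delta delta2 in auto)
    also have "\<dots> = (\<Sum>U\<in>Pow N. c U * M U X)"
      unfolding c_def sum_distrib_left sum_distrib_right
      by (subst sum.swap) (simp add: mult.assoc)
    also have "\<dots> = mpoly_eval n c X" unfolding mpoly_eval_def M_def N_def by simp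
    finally show ?thesis by simp
  qed
  have "mpoly_deg_le n c n"
    unfolding mpoly_deg_le_def using card_mono[of "{..<n}"] by fastforce
  then show ?thesis using eval by blast
qed

lemma nondet_deg_witness:
  "\<exists>c. mpoly_deg_le n c (nondet_deg n g) \<and>
      (\<forall>X\<in>cube n. (\<not> g X \<longrightarrow> \<bar>mpoly_eval n c X\<bar> \<le> 1/3) \<and> (g X \<longrightarrow> \<bar>mpoly_eval n c X\<bar> \<ge> 1))"
proof -
  obtain c where c: "mpoly_deg_le n c n" "\<forall>X\<in>cube n. mpoly_eval n c X = (if g X then 1 else 0)"
    using exact_rep by blast
  have "\<exists>c. mpoly_deg_le n c n \<and>
      (\<forall>X\<in>cube n. (\<not> g X \<longrightarrow> \<bar>mpoly_eval n c X\<bar> \<le> 1/3) \<and> (g X \<longrightarrow> \<bar>mpoly_eval n c X\<bar> \<ge> 1))"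
    using c by (intro exI[of _ c]) auto
  then have ex: "\<exists>d. \<exists>c. mpoly_deg_le n c d \<and>
      (\<forall>X\<in>cube n. (\<not> g X \<longrightarrow> \<bar>mpoly_eval n c X\<bar> \<le> 1/3) \<and> (g X \<longrightarrow> \<bar>mpoly_eval n c X\<bar> \<ge> 1))" by blast
  show ?thesis unfolding nondet_deg_def by (rule LeastI_ex[OF ex])
qed

lemma finish:
  assumes hx: "h x" and x: "x \<in> cube n" and B: "B \<subseteq> {..<n}" and s: "card B = s" "s \<ge> 1"
    and nh: "\<And>T. T \<subseteq> B \<Longrightarrow> T \<noteq> {} \<Longrightarrow> \<not> h (symd x T)"
  shows "real s \<le> 100 * real (nondet_deg n h) ^ 2"
proof -
  obtain c where dc: "mpoly_deg_le n c (nondet_deg n h)" and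
    cc: "\<forall>X\<in>cube n. (\<not> h X \<longrightarrow> \<bar>mpoly_eval n c X\<bar> \<le> 1/3) \<and> (h X \<longrightarrow> \<bar>mpoly_eval n c X\<bar> \<ge> 1)"
    using nondet_deg_witness by blast
  show ?thesis
  proof (rule key_bound[OF dc B s])
    show "1 \<le> \<bar>mpoly_eval n c x\<bar>" using cc x hx by auto
    fix T assume T: "T \<subseteq> B" "T \<noteq> {}"
    have "symd x T \<in> cube n" using x T B unfolding cube_def symd_def by auto
    then show "\<bar>mpoly_eval n c (symd x T)\<bar> \<le> 1/3" using cc nh[OF T] by auto
  qed
qed

lemma up_case:
  assumes up: "\<forall>X\<in>cube n. \<forall>Y\<in>cube n. X \<subseteq> Y \<longrightarrow> (h X \<longrightarrow> h Y)"
    and x: "x \<in> cube n" and hx: "h x"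
    and Bi: "\<And>i. i \<in> B \<Longrightarrow> i < n \<and> \<not> h (symd x {i})"
    and T: "T \<subseteq> B" "T \<noteq> {}"
  shows "\<not> h (symd x T)"
proof
  assume hT: "h (symd x T)"
  have Bx: "B \<subseteq> x"
  proof
    fix i assume i: "i \<in> B"
    show "i \<in> x"
    proof (rule ccontr)
      assume "i \<notin> x"
      then have "symd x {i} = insert i x" unfolding symd_def by auto
      moreover have "insert i x \<in> cube n" using x Bi[OF i] unfolding cube_def by auto
      ultimately show False using up x hx Bi[OF i] by auto
    qed
  qed
  obtain i where i: "i \<in> T" using T by auto
  have e1: "symd x T = x - T" using T Bx unfolding symd_def by auto
  have e2: "symd x {i} = x - {i}" using T Bx i unfolding symd_def by auto
  have c1: "x - T \<in> cube n" and c2: "x - {i} \<in> cube n" using x unfolding cube_def by auto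
  have sub: "x - T \<subseteq> x - {i}" using i by auto
  have "h (x - {i})" using up[rule_format, OF c1 c2 sub] hT e1 by simp
  then show False using Bi[of i] i T e2 by auto
qed

lemma down_case:
  assumes dn: "\<forall>X\<in>cube n. \<forall>Y\<in>cube n. X \<subseteq> Y \<longrightarrow> (h Y \<longrightarrow> h X)"
    and x: "x \<in> cube n" and hx: "h x"
    and Bi: "\<And>i. i \<in> B \<Longrightarrow> i < n \<and> \<not> h (symd x {i})"
    and T: "T \<subseteq> B" "T \<noteq> {}"
  shows "\<not> h (symd x T)"
proof
  assume hT: "h (symd x T)"
  have Bx: "B \<inter> x = {}"
  proof (rule ccontr)
    assume "B \<inter> x \<noteq> {}"
    then obtain i where i: "i \<in> B" "i \<in> x" by auto
    then have "symd x {i} = x - {i}" unfolding symd_def by auto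
    moreover have "x - {i} \<in> cube n" using x unfolding cube_def by auto
    ultimately show False using dn x hx Bi[OF i(1)] by auto
  qed
  obtain i where i: "i \<in> T" using T by auto
  have e1: "symd x T = x \<union> T" using T Bx unfolding symd_def by auto
  have e2: "symd x {i} = insert i x" using T Bx i unfolding symd_def by auto
  have c1: "x \<union> T \<in> cube n" and c2: "insert i x \<in> cube n" using x T Bi i unfolding cube_def by auto
  have sub: "insert i x \<subseteq> x \<union> T" using i by auto
  have "h (insert i x)" using dn[rule_format, OF c2 c1 sub] hT e1 by simp
  then show False using Bi[of i] i T e2 by auto
qed

theorem lemma3p7:
  shows "\<exists>C::real > 0. \<forall>(n::nat) (f::nat set \<Rightarrow> bool). monotone_bf n f \<longrightarrow>
     C * real (sensitivity n f) \<le>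
       max (real (nondet_deg n f) ^ 2) (real (nondet_deg n (\<lambda>X. \<not> f X)) ^ 2)"
proof (intro exI[of _ "1/100"] conjI allI impI)
  fix n :: nat and f :: "nat set \<Rightarrow> bool"
  assume mono: "monotone_bf n f"
  define s where "s = sensitivity n f"
  define cnt where "cnt X = card {i\<in>{..<n}. f X \<noteq> f (X - {i} \<union> ({i} - X))}" for X
  have fin: "finite (cube n)" unfolding cube_def by simp
  have ne: "cube n \<noteq> {}" unfolding cube_def by auto
  have "s \<in> cnt ` cube n" unfolding s_def sensitivity_def cnt_def
    using fin ne by (intro Max_in) auto
  then obtain x where x: "x \<in> cube n" and sx: "cnt x = s" by auto
  define B where "B = {i\<in>{..<n}. f x \<noteq> f (x - {i} \<union> ({i} - x))}"
  have cB: "card B = s" using sx unfolding cnt_def B_def by simp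
  have BN: "B \<subseteq> {..<n}" unfolding B_def by auto
  have symd1: "x - {i} \<union> ({i} - x) = symd x {i}" for i unfolding symd_def by auto
  have goal: "real s \<le> 100 * max (real (nondet_deg n f) ^ 2) (real (nondet_deg n (\<lambda>X. \<not> f X)) ^ 2)"
  proof (cases "s = 0")
    case True then show ?thesis by (simp add: le_max_iff_disj)
  next
    case False
    then have s1: "s \<ge> 1" by simp
    show ?thesis
    proof (cases "f x")
      case True
      have Bi: "\<And>i. i \<in> B \<Longrightarrow> i < n \<and> \<not> f (symd x {i})"
        using True unfolding B_def symd1 by auto
      have nh: "\<not> f (symd x T)" if "T \<subseteq> B" "T \<noteq> {}" for T
        using mono unfolding monotone_bf_def
        using up_case[OF _ x True Bi that] down_case[OF _ x True Bi that] by blast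
      have "real s \<le> 100 * real (nondet_deg n f) ^ 2"
        by (rule finish[OF True x BN cB s1 nh])
      moreover have "real (nondet_deg n f) ^ 2 \<le> max (real (nondet_deg n f) ^ 2) (real (nondet_deg n (\<lambda>X. \<not> f X)) ^ 2)"
        by (rule max.cobounded1)
      ultimately show ?thesis by linarith
    next
      case False
      define h where "h X = (\<not> f X)" for X
      have hx: "h x" using False h_def by simp
      have Bi: "\<And>i. i \<in> B \<Longrightarrow> i < n \<and> \<not> h (symd x {i})"
        using False unfolding B_def symd1 h_def by auto
      have nh: "\<not> h (symd x T)" if "T \<subseteq> B" "T \<noteq> {}" for T
      proof -
        have "(\<forall>X\<in>cube n. \<forall>Y\<in>cube n. X \<subseteq> Y \<longrightarrow> (h X \<longrightarrow> h Y)) \<or>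
              (\<forall>X\<in>cube n. \<forall>Y\<in>cube n. X \<subseteq> Y \<longrightarrow> (h Y \<longrightarrow> h X))"
          using mono unfolding monotone_bf_def h_def by blast
        then show ?thesis
          using up_case[OF _ x hx Bi that] down_case[OF _ x hx Bi that] by blast
      qed
      have heq: "h = (\<lambda>X. \<not> f X)" unfolding h_def by simp
      have "real s \<le> 100 * real (nondet_deg n h) ^ 2"
        by (rule finish[OF hx x BN cB s1 nh])
      then have "real s \<le> 100 * real (nondet_deg n (\<lambda>X. \<not> f X)) ^ 2" unfolding heq .
      moreover have "real (nondet_deg n (\<lambda>X. \<not> f X)) ^ 2 \<le> max (real (nondet_deg n f) ^ 2) (real (nondet_deg n (\<lambda>X. \<not> f X)) ^ 2)"
        by (rule max.cobounded2)
      ultimately show ?thesis by linarith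
    qed
  qed
  then show "1/100 * real (sensitivity n f) \<le> max (real (nondet_deg n f) ^ 2) (real (nondet_deg n (\<lambda>X. \<not> f X)) ^ 2)"
    unfolding s_def by simp
qed simp

end
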